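(* In the three-agent investor/hedge-fund setting with restricted reports, fix the investor's report $\tilde m$ and let $\tilde\alpha=\tilde m/(2+\rho)$. Set $c=\frac{a\nu-\tilde\alpha(1-\nu)}{\nu(2-\nu)}$ and $s=\frac{\eta(1-\nu)}{\nu(2-\nu)}$. (i) Given fund 3's report $\tilde b$, the report $\tilde a$ maximizing fund 2's utility $g_2$ is uniquely $\tilde a^*=c+s\tilde b$. (ii) Symmetrically, given fund 2's report $\tilde a$, the report $\tilde b$ maximizing fund 3's utility $g_3$ is uniquely $\tilde b^*=c+s\tilde a$.
   Context: Three agents: agent 1 (investor), agents 2 and 3 (hedge funds). Parameters $m,a\in\mathbb{R}$ and $\rho\in(-1,1)$; true beliefs $M=\begin{pmatrix}0&a&a\\ m&0&0\\ m&0&0\end{pmatrix}$ (column $i$ is agent $i$'s true belief vector $\mu_i$), $\Sigma=\begin{pmatrix}1&0&0\\0&1&\rho\\0&\rho&1\end{pmatrix}$, $\Gamma=I_3$. Restricted reports: the investor reports a common value $\tilde m$ for $M'_{21}=M'_{31}$, fund 2 reports $M'_{12}=\tilde a$, fund 3 reports $M'_{13}=\tilde b$, and all other entries of $M'$ equal the true value $0$. The stable point for $M'$ is the unique $(W,P)$ with $W=W^T$, $P^T=-P$ and $M'-P=2\Sigma W\Gamma$. Agent $i$'s utility is $g_i=w_i^T(\mu_i-Pe_i)-w_i^T\Sigma w_i$, $w_i=We_i$. Define $\nu=\tfrac12\big(\tfrac1{2-\rho}+\tfrac1{2+\rho}\big)$ and $\eta=\tfrac12\big(\tfrac1{2-\rho}-\tfrac1{2+\rho}\big)$.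 *)

theory Defs
  imports "HOL-Analysis.Analysis"
begin

type_synonym mat3 = "real^3^3"

definition is_stable_point :: "mat3 \<Rightarrow> mat3 \<Rightarrow> mat3 \<Rightarrow> mat3 \<Rightarrow> mat3 \<Rightarrow> bool" where
  "is_stable_point M' Sig Gam W P \<longleftrightarrow>
     transpose W = W \<and> transpose P = - P \<and> M' - P = 2 *\<^sub>R (Sig ** W ** Gam)"

definition stable_point :: "mat3 \<Rightarrow> mat3 \<Rightarrow> mat3 \<Rightarrow> mat3 \<times> mat3" where
  "stable_point M' Sig Gam = (THE (W, P). is_stable_point M' Sig Gam W P)"

definition utility :: "mat3 \<Rightarrow> mat3 \<Rightarrow> mat3 \<Rightarrow> mat3 \<Rightarrow> 3 \<Rightarrow> real" where
  "utility M Sig Gam M' i =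
     (let (W, P) = stable_point M' Sig Gam; w = W *v axis i 1
      in w \<bullet> (column i M - P *v axis i 1) - w \<bullet> (Sig *v w))"

definition true_beliefs :: "real \<Rightarrow> real \<Rightarrow> mat3" where
  "true_beliefs m a = vector [vector [0, a, a], vector [m, 0, 0], vector [m, 0, 0]]"

definition reported_beliefs :: "real \<Rightarrow> real \<Rightarrow> real \<Rightarrow> mat3" where
  "reported_beliefs tm ta tb = vector [vector [0, ta, tb], vector [tm, 0, 0], vector [tm, 0, 0]]"

definition Sigma_rho :: "real \<Rightarrow> mat3" where
  "Sigma_rho \<rho> = vector [vector [1, 0, 0], vector [0, 1, \<rho>], vector [0, \<rho>, 1]]"

definition nu :: "real \<Rightarrow> real" where
  "nu \<rho> = (1/2) * (1 / (2 - \<rho>) + 1 / (2 + \<rho>))"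

definition eta :: "real \<Rightarrow> real" where
  "eta \<rho> = (1/2) * (1 / (2 - \<rho>) - 1 / (2 + \<rho>))"

definition g :: "real \<Rightarrow> real \<Rightarrow> real \<Rightarrow> 3 \<Rightarrow> real \<Rightarrow> real \<Rightarrow> real \<Rightarrow> real" where
  "g m a \<rho> i tm ta tb =
     utility (true_beliefs m a) (Sigma_rho \<rho>) (mat 1) (reported_beliefs tm ta tb) i"

end

theory Submission
  imports Defs
begin

definition pp :: "real \<Rightarrow> real \<Rightarrow> real \<Rightarrow> real \<Rightarrow> real" where
  "pp \<rho> tm ta tb = ((2-\<rho>^2)*ta + \<rho>*tb - (2-\<rho>)*tm)/(4-\<rho>^2)"

definition W0 :: "real \<Rightarrow> real \<Rightarrow> real \<Rightarrow> real \<Rightarrow> mat3" where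
  "W0 \<rho> tm ta tb = (let x = (ta - pp \<rho> tm ta tb)/2; y = (tb - pp \<rho> tm tb ta)/2 in
     vector [vector [0,x,y], vector [x,0,0], vector [y,0,0]])"
definition P0 :: "real \<Rightarrow> real \<Rightarrow> real \<Rightarrow> real \<Rightarrow> mat3" where
  "P0 \<rho> tm ta tb = (let p = pp \<rho> tm ta tb; q = pp \<rho> tm tb ta in
     vector [vector [0,p,q], vector [-p,0,0], vector [-q,0,0]])"

lemma mat3_eq: "(A::mat3) = B \<longleftrightarrow> (A$1$1 = B$1$1 \<and> A$1$2 = B$1$2 \<and> A$1$3 = B$1$3 \<and>
  A$2$1 = B$2$1 \<and> A$2$2 = B$2$2 \<and> A$2$3 = B$2$3 \<and> A$3$1 = B$3$1 \<and> A$3$2 = B$3$2 \<and> A$3$3 = B$3$3)"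
  by (auto simp: vec_eq_iff forall_3)

lemma E_ne: assumes "-1 < \<rho>" "\<rho> < 1" shows "4 - \<rho>^2 \<noteq> (0::real)"
proof -
  have "0 < (1-\<rho>)*(1+\<rho>)" using assms by (intro mult_pos_pos) auto
  then show ?thesis by (simp add: power2_eq_square algebra_simps)
qed

lemma pp_rel: assumes "4 - \<rho>^2 \<noteq> (0::real)"
  shows "2 * pp \<rho> tm ta tb + \<rho> * pp \<rho> tm tb ta = ta + \<rho>*tb - tm"
proof -
  have a: "pp \<rho> tm ta tb * (4-\<rho>^2) = (2-\<rho>^2)*ta + \<rho>*tb - (2-\<rho>)*tm" for ta tb
    using assms by (simp add: pp_def)
  have "(2 * pp \<rho> tm ta tb + \<rho> * pp \<rho> tm tb ta) * (4-\<rho>^2)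
     = 2 * (pp \<rho> tm ta tb * (4-\<rho>^2)) + \<rho> * (pp \<rho> tm tb ta * (4-\<rho>^2))"
    by (simp add: algebra_simps)
  also have "\<dots> = 2*((2-\<rho>^2)*ta + \<rho>*tb - (2-\<rho>)*tm) + \<rho>*((2-\<rho>^2)*tb + \<rho>*ta - (2-\<rho>)*tm)"
    by (simp only: a)
  also have "\<dots> = (ta + \<rho>*tb - tm) * (4-\<rho>^2)"
    by (simp add: algebra_simps power2_eq_square)
  finally have "(2 * pp \<rho> tm ta tb + \<rho> * pp \<rho> tm tb ta) * (4-\<rho>^2) = (ta + \<rho>*tb - tm) * (4-\<rho>^2)" .
  then show ?thesis using assms by simp
qed

lemma mm_entry: "((A::mat3) ** B)$i$j = A$i$1*B$1$j + A$i$2*B$2$j + A$i$3*B$3$j"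
  by (simp add: matrix_matrix_mult_def sum_3)

lemma exist_sp:
  assumes "-1 < \<rho>" "\<rho> < 1"
  shows "is_stable_point (reported_beliefs tm ta tb) (Sigma_rho \<rho>) (mat 1) (W0 \<rho> tm ta tb) (P0 \<rho> tm ta tb)"
proof -
  have E: "4 - \<rho>^2 \<noteq> 0" proof -
    have "0 < (1-\<rho>)*(1+\<rho>)" using assms by (intro mult_pos_pos) auto
    then show ?thesis by (simp add: power2_eq_square algebra_simps)
  qed
  show ?thesis
  unfolding is_stable_point_def mat3_eq
  apply (simp add: W0_def P0_def Let_def transpose_def matrix_mul_rid mm_entry reported_beliefs_def Sigma_rho_def)
  using pp_rel[OF E, of tm ta tb] pp_rel[OF E, of tm tb ta] by (simp add: algebra_simps diff_divide_distrib)
qed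

lemma tr_ent: "transpose (A::mat3) = B \<Longrightarrow> A$j$i = B$i$j"
  by (auto simp: transpose_def)

lemma uniq_sp:
  assumes "-1 < \<rho>" "\<rho> < 1"
    and S: "is_stable_point (reported_beliefs tm ta tb) (Sigma_rho \<rho>) (mat 1) W P"
  shows "W = W0 \<rho> tm ta tb \<and> P = P0 \<rho> tm ta tb"
proof -
  have E: "4 - \<rho>^2 \<noteq> 0" using E_ne assms(1,2) by blast
  have r1: "1 - \<rho>*\<rho> \<noteq> 0"
  proof -
    have "0 < (1-\<rho>)*(1+\<rho>)" using assms by (intro mult_pos_pos) auto
    then show ?thesis by (simp add: algebra_simps)
  qed
  from S have T: "transpose W = W" "transpose P = -P"
     "reported_beliefs tm ta tb - P = 2 *\<^sub>R (Sigma_rho \<rho> ** W)"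
    by (simp_all add: is_stable_point_def matrix_mul_rid)
  have tW: "W$j$i = W$i$j" for i j using tr_ent[OF T(1)] .
  have tP: "P$j$i = - P$i$j" for i j using tr_ent[OF T(2), of j i] by (simp only: vector_uminus_component)
  have sW: "W$2$1 = W$1$2" "W$3$1 = W$1$3" "W$3$2 = W$2$3" using tW[of 1 2] tW[of 1 3] tW[of 2 3] by simp_all
  have sP: "P$1$1 = 0" "P$2$2 = 0" "P$3$3 = 0" "P$2$1 = - P$1$2" "P$3$1 = - P$1$3" "P$3$2 = - P$2$3"
    using tP[of 1 1] tP[of 2 2] tP[of 3 3] tP[of 1 2] tP[of 1 3] tP[of 2 3] by simp_all
  have T3: "(reported_beliefs tm ta tb - P)$i$j = (2 *\<^sub>R (Sigma_rho \<rho> ** W))$i$j" for i j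
    using T(3) by simp
  have e: "- P$1$1 = 2 * W$1$1" "ta - P$1$2 = 2 * W$1$2" "tb - P$1$3 = 2*W$1$3"
     "tm - P$2$1 = 2*(W$2$1 + \<rho>*W$3$1)" "- P$2$2 = 2*(W$2$2 + \<rho>*W$3$2)" "- P$2$3 = 2*(W$2$3 + \<rho>*W$3$3)"
     "tm - P$3$1 = 2*(\<rho>*W$2$1 + W$3$1)" "- P$3$2 = 2*(\<rho>*W$2$2 + W$3$2)" "- P$3$3 = 2*(\<rho>*W$2$3 + W$3$3)"
    using T3[of 1 1] T3[of 1 2] T3[of 1 3] T3[of 2 1] T3[of 2 2] T3[of 2 3] T3[of 3 1] T3[of 3 2] T3[of 3 3]
    by (simp_all add: mm_entry reported_beliefs_def Sigma_rho_def)
  have w11: "W$1$1 = 0" using e(1) sP(1) by simp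
  have w33: "W$3$3 = - \<rho> * W$2$3" using e(9) sP(3) by simp
  have w22: "W$2$2 = - \<rho> * W$2$3" using e(5) sP(2) sW(3) by simp
  have "P$2$3 = 2*(W$2$3 - \<rho>*\<rho>*W$2$3)" using e(8) sP(6) sW(3) w22 by simp
  moreover have "- P$2$3 = 2*(W$2$3 - \<rho>*\<rho>*W$2$3)" using e(6) w33 by simp
  ultimately have "(1 - \<rho>*\<rho>) * W$2$3 = 0" by (simp add: algebra_simps)
  then have w23: "W$2$3 = 0" using r1 by simp
  then have p23: "P$2$3 = 0" using e(6) w33 by simp
  define p q where "p = P$1$2" and "q = P$1$3"
  have x: "W$1$2 = (ta - p)/2" using e(2) p_def by simp
  have y: "W$1$3 = (tb - q)/2" using e(3) q_def by simp
  have l1: "2*p + \<rho>*q = ta + \<rho>*tb - tm" using e(4) sP(4) sW x y unfolding p_def q_def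
    by (simp add: algebra_simps diff_divide_distrib)
  have l2: "2*q + \<rho>*p = tb + \<rho>*ta - tm" using e(7) sP(5) sW x y unfolding p_def q_def
    by (simp add: algebra_simps diff_divide_distrib)
  have m1: "2*pp \<rho> tm ta tb + \<rho>*pp \<rho> tm tb ta = ta + \<rho>*tb - tm" using pp_rel[OF E] by simp
  have m2: "2*pp \<rho> tm tb ta + \<rho>*pp \<rho> tm ta tb = tb + \<rho>*ta - tm" using pp_rel[OF E] by simp
  have d1: "2*(p - pp \<rho> tm ta tb) + \<rho>*(q - pp \<rho> tm tb ta) = 0" using l1 m1 by (simp add: algebra_simps)
  have d2: "2*(q - pp \<rho> tm tb ta) + \<rho>*(p - pp \<rho> tm ta tb) = 0" using l2 m2 by (simp add: algebra_simps)
  have "(4 - \<rho>^2) * (p - pp \<rho> tm ta tb) = 2 * (2*(p - pp \<rho> tm ta tb) + \<rho>*(q - pp \<rho> tm tb ta)) - \<rho> * (2*(q - pp \<rho> tm tb ta) + \<rho>*(p - pp \<rho> tm ta tb))"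
    by (simp add: algebra_simps power2_eq_square)
  then have "(4 - \<rho>^2) * (p - pp \<rho> tm ta tb) = 0" using d1 d2 by simp
  then have pv: "p = pp \<rho> tm ta tb" using E by simp
  have "(4 - \<rho>^2) * (q - pp \<rho> tm tb ta) = 2 * (2*(q - pp \<rho> tm tb ta) + \<rho>*(p - pp \<rho> tm ta tb)) - \<rho> * (2*(p - pp \<rho> tm ta tb) + \<rho>*(q - pp \<rho> tm tb ta))"
    by (simp add: algebra_simps power2_eq_square)
  then have "(4 - \<rho>^2) * (q - pp \<rho> tm tb ta) = 0" using d1 d2 by simp
  then have qv: "q = pp \<rho> tm tb ta" using E by simp
  show ?thesis unfolding mat3_eq W0_def P0_def Let_def
    using w11 w22 w33 w23 p23 sW sP x y pv qv unfolding p_def q_def by simp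
qed

lemma sp_eval:
  assumes "-1 < \<rho>" "\<rho> < 1"
  shows "stable_point (reported_beliefs tm ta tb) (Sigma_rho \<rho>) (mat 1) = (W0 \<rho> tm ta tb, P0 \<rho> tm ta tb)"
  unfolding stable_point_def
proof (rule the_equality)
  show "case (W0 \<rho> tm ta tb, P0 \<rho> tm ta tb) of (W, P) \<Rightarrow> is_stable_point (reported_beliefs tm ta tb) (Sigma_rho \<rho>) (mat 1) W P"
    using exist_sp[OF assms] by simp
next
  fix x assume "case x of (W, P) \<Rightarrow> is_stable_point (reported_beliefs tm ta tb) (Sigma_rho \<rho>) (mat 1) W P"
  then show "x = (W0 \<rho> tm ta tb, P0 \<rho> tm ta tb)"
    using uniq_sp[OF assms] by (cases x) auto
qed

lemma g2_eval:
  assumes "-1 < \<rho>" "\<rho> < 1"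
  shows "g m a \<rho> 2 tm ta tb = (ta - pp \<rho> tm ta tb)/2 * (a - pp \<rho> tm ta tb) - ((ta - pp \<rho> tm ta tb)/2)^2"
  unfolding g_def utility_def sp_eval[OF assms]
  by (simp add: W0_def P0_def Let_def matrix_vector_mult_def axis_def sum_3 inner_vec_def column_def
      true_beliefs_def Sigma_rho_def power2_eq_square)

lemma g3_eval:
  assumes "-1 < \<rho>" "\<rho> < 1"
  shows "g m a \<rho> 3 tm ta tb = (tb - pp \<rho> tm tb ta)/2 * (a - pp \<rho> tm tb ta) - ((tb - pp \<rho> tm tb ta)/2)^2"
  unfolding g_def utility_def sp_eval[OF assms]
  by (simp add: W0_def P0_def Let_def matrix_vector_mult_def axis_def sum_3 inner_vec_def column_def
      true_beliefs_def Sigma_rho_def power2_eq_square)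

lemma quad_id:
  fixes v p0 a t t0 :: real
  shows "(t - (v * t + p0)) / 2 * (a - (v * t + p0)) - ((t - (v * t + p0)) / 2)^2
     = (t0 - (v * t0 + p0)) / 2 * (a - (v * t0 + p0)) - ((t0 - (v * t0 + p0)) / 2)^2
       + (t - t0) * ((1 - v) / 2 * a - (1 - v) * (1 + v) / 2 * t0 + v * p0 / 2) - (1 - v^2) / 4 * (t - t0)^2"
  by (simp add: field_simps power2_eq_square)

lemma opt:
  fixes f :: "real \<Rightarrow> real"
  assumes "\<And>t. f t = f t0 - K * (t - t0)^2" "K > 0"
  shows "(\<forall>t. f t \<le> f t0) \<and> (\<forall>t'. (\<forall>t. f t \<le> f t') \<longrightarrow> t' = t0)"
proof (intro conjI allI impI)
  fix t show "f t \<le> f t0" using assms(1)[of t] assms(2) by (simp add: mult_nonneg_nonneg)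
next
  fix t' assume "\<forall>t. f t \<le> f t'"
  then have "f t0 \<le> f t'" by blast
  then have "K * (t' - t0)^2 \<le> 0" using assms(1)[of t'] by simp
  then have "(t' - t0)^2 \<le> 0" using assms(2) by (simp add: mult_le_0_iff)
  then show "t' = t0" by simp
qed

lemma c_abs:
  fixes E n al a :: real
  assumes "E \<noteq> 0" "E - 1 \<noteq> 0" "n = 2/E"
  shows "4*(E-1) * ((a*n - al*(1-n))/(n*(2-n))) = E*(2*a - al*(E-2))"
proof -
  have A: "n*(2-n) = 4*(E-1)/E^2" using assms(1,2) unfolding assms(3) by (simp add: field_simps power2_eq_square)
  have B: "a*n - al*(1-n) = (2*a - al*(E-2))/E" using assms(1,2) unfolding assms(3) by (simp add: field_simps)
  show ?thesis unfolding A B using assms(1,2) by (simp add: field_simps power2_eq_square)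
qed

lemma s_abs:
  fixes E n e \<rho> :: real
  assumes "E \<noteq> 0" "E - 1 \<noteq> 0" "n = 2/E" "e = \<rho>/E"
  shows "4*(E-1) * (e*(1-n)/(n*(2-n))) = \<rho>*(E-2)"
proof -
  have A: "n*(2-n) = 4*(E-1)/E^2" using assms(1,2) unfolding assms(3) by (simp add: field_simps power2_eq_square)
  have B: "e*(1-n) = \<rho>*(E-2)/E^2" using assms(1,2) unfolding assms(3,4) by (simp add: field_simps power2_eq_square)
  show ?thesis unfolding A B using assms(1,2) by (simp add: field_simps power2_eq_square)
qed

lemma coef:
  fixes \<rho> tm a :: real
  assumes "-1 < \<rho>" "\<rho> < 1"
  shows "4*(3-\<rho>^2) * ((a * nu \<rho> - tm / (2 + \<rho>) * (1 - nu \<rho>)) / (nu \<rho> * (2 - nu \<rho>)))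
          = 2*(4-\<rho>^2)*a - (2-\<rho>^2)*(2-\<rho>)*tm"
    and "4*(3-\<rho>^2) * (eta \<rho> * (1 - nu \<rho>) / (nu \<rho> * (2 - nu \<rho>))) = \<rho>*(2-\<rho>^2)"
proof -
  have h1: "2 - \<rho> \<noteq> 0" "2 + \<rho> \<noteq> 0" using assms by auto
  have E: "4 - \<rho>^2 \<noteq> 0" using E_ne assms by blast
  have Ef: "4 - \<rho>^2 = (2-\<rho>)*(2+\<rho>)" by (simp add: algebra_simps power2_eq_square)
  have h3: "(4 - \<rho>^2) - 1 \<noteq> 0"
  proof -
    have "0 < (1-\<rho>)*(1+\<rho>)" using assms by (intro mult_pos_pos) auto
    then have "\<rho>*\<rho> < 1" by (simp add: algebra_simps)
    then show ?thesis by (auto simp: power2_eq_square)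
  qed
  have nu: "nu \<rho> = 2/(4-\<rho>^2)" unfolding nu_def Ef using h1 by (simp add: field_simps)
  have eta: "eta \<rho> = \<rho>/(4-\<rho>^2)" unfolding eta_def Ef using h1 by (simp add: field_simps)
  define al where "al = tm / (2+\<rho>)"
  have al: "(4-\<rho>^2) * al = (2-\<rho>)*tm" unfolding Ef al_def using h1 by simp
  have "4*(3-\<rho>^2) * ((a * nu \<rho> - al * (1 - nu \<rho>)) / (nu \<rho> * (2 - nu \<rho>)))
     = (4-\<rho>^2)*(2*a - al*((4-\<rho>^2)-2))"
    using c_abs[OF E h3 nu, of a al] by simp
  also have "\<dots> = 2*(4-\<rho>^2)*a - (2-\<rho>^2)*((4-\<rho>^2) * al)"
    by (simp add: algebra_simps)
  also have "\<dots> = 2*(4-\<rho>^2)*a - (2-\<rho>^2)*(2-\<rho>)*tm" unfolding al by simp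
  finally show "4*(3-\<rho>^2) * ((a * nu \<rho> - tm / (2 + \<rho>) * (1 - nu \<rho>)) / (nu \<rho> * (2 - nu \<rho>)))
          = 2*(4-\<rho>^2)*a - (2-\<rho>^2)*(2-\<rho>)*tm" unfolding al_def .
  show "4*(3-\<rho>^2) * (eta \<rho> * (1 - nu \<rho>) / (nu \<rho> * (2 - nu \<rho>))) = \<rho>*(2-\<rho>^2)"
    using s_abs[OF E h3 nu eta] by simp
qed

lemma foc_abs:
  fixes E v a t0 N :: real
  assumes "E \<noteq> 0" "v = (E-2)/E" "4*(E-1)*t0 = 2*E*a + (E-2)*N"
  shows "(1 - v) / 2 * a - (1 - v) * (1 + v) / 2 * t0 + v * (N/E) / 2 = 0"
proof -
  have "(1 - v) / 2 * a - (1 - v) * (1 + v) / 2 * t0 + v * (N/E) / 2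
     = (2*E*a - 4*(E-1)*t0 + (E-2)*N) / (2*E^2)"
    using assms(1) unfolding assms(2) by (simp add: field_simps power2_eq_square)
  then show ?thesis using assms(3) by simp
qed

theorem mainTheorem12:
  fixes m a \<rho> tm :: real
  assumes "-1 < \<rho>" and "\<rho> < 1"
  defines "\<alpha> \<equiv> tm / (2 + \<rho>)"
  defines "c \<equiv> (a * nu \<rho> - \<alpha> * (1 - nu \<rho>)) / (nu \<rho> * (2 - nu \<rho>))"
  defines "s \<equiv> eta \<rho> * (1 - nu \<rho>) / (nu \<rho> * (2 - nu \<rho>))"
  shows "(\<forall>tb. (\<forall>ta. g m a \<rho> 2 tm ta tb \<le> g m a \<rho> 2 tm (c + s * tb) tb)
              \<and> (\<forall>ta'. (\<forall>ta. g m a \<rho> 2 tm ta tb \<le> g m a \<rho> 2 tm ta' tb) \<longrightarrow> ta' = c + s * tb))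
       \<and> (\<forall>ta. (\<forall>tb. g m a \<rho> 3 tm ta tb \<le> g m a \<rho> 3 tm ta (c + s * ta))
              \<and> (\<forall>tb'. (\<forall>tb. g m a \<rho> 3 tm ta tb \<le> g m a \<rho> 3 tm ta tb') \<longrightarrow> tb' = c + s * ta))"
proof -
  have E: "4 - \<rho>^2 \<noteq> 0" using E_ne assms(1,2) by blast
  have rr: "\<rho>*\<rho> < 1"
  proof -
    have "0 < (1-\<rho>)*(1+\<rho>)" using assms by (intro mult_pos_pos) auto
    then show ?thesis by (simp add: algebra_simps)
  qed
  define v where "v = (2-\<rho>^2)/(4-\<rho>^2)"
  have vE: "v = ((4-\<rho>^2) - 2)/(4-\<rho>^2)" unfolding v_def by simp
  have pl: "pp \<rho> tm x y = v * x + (\<rho>*y - (2-\<rho>)*tm)/(4-\<rho>^2)" for x y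
  proof -
    have "pp \<rho> tm x y = ((2-\<rho>^2)*x + (\<rho>*y - (2-\<rho>)*tm))/(4-\<rho>^2)"
      unfolding pp_def by (simp add: add_diff_eq)
    then show ?thesis unfolding v_def by (simp add: add_divide_distrib)
  qed
  have K: "(1 - v^2)/4 > 0"
  proof -
    have p4: "0 < 4-\<rho>^2" "0 < 2-\<rho>^2" "2-\<rho>^2 < 4-\<rho>^2" using rr by (auto simp: power2_eq_square)
    have "v < 1" "0 < v" unfolding v_def using p4 by auto
    then have "0 < (1-v)*(1+v)" by (intro mult_pos_pos) auto
    then show ?thesis by (simp add: algebra_simps power2_eq_square)
  qed
  have t0: "4*((4-\<rho>^2)-1)*(c + s * y) = 2*(4-\<rho>^2)*a + ((4-\<rho>^2)-2)*(\<rho>*y - (2-\<rho>)*tm)" for y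
  proof -
    have "4*((4-\<rho>^2)-1)*(c + s * y) = 4*(3-\<rho>^2)*c + (4*(3-\<rho>^2)* s) * y" by (simp add: algebra_simps)
    also have "\<dots> = (2*(4-\<rho>^2)*a - (2-\<rho>^2)*(2-\<rho>)*tm) + (\<rho>*(2-\<rho>^2)) * y"
      unfolding c_def s_def \<alpha>_def using coef[OF assms(1,2)] by simp
    also have "\<dots> = 2*(4-\<rho>^2)*a + ((4-\<rho>^2)-2)*(\<rho>*y - (2-\<rho>)*tm)" by (simp add: algebra_simps)
    finally show ?thesis .
  qed
  have foc: "(1 - v) / 2 * a - (1 - v) * (1 + v) / 2 * (c + s * y) + v * ((\<rho>*y - (2-\<rho>)*tm)/(4-\<rho>^2)) / 2 = 0" for y
    using foc_abs[OF E vE t0] .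
  have quad: "G t = G (c + s * y) - (1 - v^2)/4 * (t - (c + s * y))^2"
    if "\<And>t. G t = (t - (v * t + (\<rho>*y - (2-\<rho>)*tm)/(4-\<rho>^2))) / 2 * (a - (v * t + (\<rho>*y - (2-\<rho>)*tm)/(4-\<rho>^2)))
        - ((t - (v * t + (\<rho>*y - (2-\<rho>)*tm)/(4-\<rho>^2))) / 2)^2" for G y t
  proof -
    have Q: "(t - (v * t + (\<rho>*y - (2-\<rho>)*tm)/(4-\<rho>^2))) / 2 * (a - (v * t + (\<rho>*y - (2-\<rho>)*tm)/(4-\<rho>^2)))
        - ((t - (v * t + (\<rho>*y - (2-\<rho>)*tm)/(4-\<rho>^2))) / 2)^2
      = (c + s * y - (v * (c + s * y) + (\<rho>*y - (2-\<rho>)*tm)/(4-\<rho>^2))) / 2 * (a - (v * (c + s * y) + (\<rho>*y - (2-\<rho>)*tm)/(4-\<rho>^2)))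
        - ((c + s * y - (v * (c + s * y) + (\<rho>*y - (2-\<rho>)*tm)/(4-\<rho>^2))) / 2)^2
        - (1 - v^2) / 4 * (t - (c + s * y))^2"
      using quad_id[of t v "(\<rho>*y - (2-\<rho>)*tm)/(4-\<rho>^2)" a "c + s * y"]
      by (simp only: foc[of y] mult_zero_right add_0_right)
    show ?thesis unfolding that using Q .
  qed
  show ?thesis
  proof (rule conjI; rule allI)
    fix tb
    show "(\<forall>ta. g m a \<rho> 2 tm ta tb \<le> g m a \<rho> 2 tm (c + s * tb) tb)
              \<and> (\<forall>ta'. (\<forall>ta. g m a \<rho> 2 tm ta tb \<le> g m a \<rho> 2 tm ta' tb) \<longrightarrow> ta' = c + s * tb)"
    proof -
      have h: "g m a \<rho> 2 tm t tb = g m a \<rho> 2 tm (c + s * tb) tb - (1 - v^2)/4 * (t - (c + s * tb))^2" for t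
        by (rule quad[where G="\<lambda>ta. g m a \<rho> 2 tm ta tb"]) (simp add: g2_eval[OF assms(1,2)] pl)
      show ?thesis using opt[of "\<lambda>ta. g m a \<rho> 2 tm ta tb" "c + s * tb" "(1 - v^2)/4"] h K by blast
    qed
  next
    fix ta
    show "(\<forall>tb. g m a \<rho> 3 tm ta tb \<le> g m a \<rho> 3 tm ta (c + s * ta))
              \<and> (\<forall>tb'. (\<forall>tb. g m a \<rho> 3 tm ta tb \<le> g m a \<rho> 3 tm ta tb') \<longrightarrow> tb' = c + s * ta)"
    proof -
      have h: "g m a \<rho> 3 tm ta t = g m a \<rho> 3 tm ta (c + s * ta) - (1 - v^2)/4 * (t - (c + s * ta))^2" for t
        by (rule quad[where G="\<lambda>tb. g m a \<rho> 3 tm ta tb"]) (simp add: g3_eval[OF assms(1,2)] pl)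
      show ?thesis using opt[of "\<lambda>tb. g m a \<rho> 3 tm ta tb" "c + s * ta" "(1 - v^2)/4"] h K by blast
    qed
  qed
qed

end
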